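(* Let the labels $\{1,\dots,k\}$ be partitioned into $b\ge2$ blocks of sizes $s_1,\dots,s_b$ ($s_1+\dots+s_b=k$), and let $L_{01,b}(i,j)=[i\text{ and }j\text{ are not in the same block}]$ with quadratic surrogate $\Phi_{quad}(f,y)=\frac1{2k}\|f+L_{01,b}(:,y)\|_2^2$. Without constraints on the scores, $$H_{\Phi_{quad},L_{01,b},\mathbb{R}^k}(\varepsilon)=\frac{\varepsilon^2}{4k}\min_{v=1,\dots,b}\frac{2s_v}{s_v+1}\le\frac{\varepsilon^2}{2k},\qquad0\le\varepsilon\le1.$$
   Context: $\mathrm{pred}(f)$ is the smallest index maximizing $f_c$. For $q\in\Delta_k$: $\ell(f,q)=\sum_cq_cL(\mathrm{pred}(f),c)$, $\phi(f,q)=\sum_cq_c\Phi(f,c)$, $\delta\ell(f,q)=\ell(f,q)-\inf_{\hat f\in\mathcal{F}}\ell(\hat f,q)$, $\delta\phi(f,q)=\phi(f,q)-\inf_{\hat f\in\mathcal{F}}\phi(\hat f,q)$; calibration function $H_{\Phi,L,\mathcal{F}}(\varepsilon)=\inf\{\delta\phi(f,q):f\in\mathcal{F},q\in\Delta_k,\delta\ell(f,q)\ge\varepsilon\}$ ($+\infty$ if empty); here $\mathcal{F}=\mathbb{R}^k$. *)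

theory Defs
  imports "HOL-Analysis.Analysis" "HOL-Library.Extended_Real"
begin

text \<open>Labels are 1..k; score vectors and distributions are functions nat => real,
  of which only the values on {1..k} matter.\<close>

definition pred :: "nat \<Rightarrow> (nat \<Rightarrow> real) \<Rightarrow> nat" where
  "pred k f = (LEAST c. c \<in> {1..k} \<and> (\<forall>d\<in>{1..k}. f d \<le> f c))"

definition prob_simplex :: "nat \<Rightarrow> (nat \<Rightarrow> real) set" where
  "prob_simplex k = {q. (\<forall>c\<in>{1..k}. 0 \<le> q c) \<and> (\<Sum>c\<in>{1..k}. q c) = 1}"

definition cond_loss :: "nat \<Rightarrow> (nat \<Rightarrow> nat \<Rightarrow> real) \<Rightarrow> (nat \<Rightarrow> real) \<Rightarrow> (nat \<Rightarrow> real) \<Rightarrow> real" where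
  "cond_loss k L f q = (\<Sum>c\<in>{1..k}. q c * L (pred k f) c)"

definition cond_surr :: "nat \<Rightarrow> ((nat \<Rightarrow> real) \<Rightarrow> nat \<Rightarrow> real) \<Rightarrow> (nat \<Rightarrow> real) \<Rightarrow> (nat \<Rightarrow> real) \<Rightarrow> real" where
  "cond_surr k Phi f q = (\<Sum>c\<in>{1..k}. q c * Phi f c)"

definition excess_loss :: "nat \<Rightarrow> (nat \<Rightarrow> nat \<Rightarrow> real) \<Rightarrow> (nat \<Rightarrow> real) set \<Rightarrow> (nat \<Rightarrow> real) \<Rightarrow> (nat \<Rightarrow> real) \<Rightarrow> real" where
  "excess_loss k L F f q = cond_loss k L f q - (INF g\<in>F. cond_loss k L g q)"

definition excess_surr :: "nat \<Rightarrow> ((nat \<Rightarrow> real) \<Rightarrow> nat \<Rightarrow> real) \<Rightarrow> (nat \<Rightarrow> real) set \<Rightarrow> (nat \<Rightarrow> real) \<Rightarrow> (nat \<Rightarrow> real) \<Rightarrow> real" where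
  "excess_surr k Phi F f q = cond_surr k Phi f q - (INF g\<in>F. cond_surr k Phi g q)"

text \<open>Calibration function; the infimum is taken in ereal so that the empty set gives +infinity.\<close>
definition calib :: "nat \<Rightarrow> ((nat \<Rightarrow> real) \<Rightarrow> nat \<Rightarrow> real) \<Rightarrow> (nat \<Rightarrow> nat \<Rightarrow> real) \<Rightarrow> (nat \<Rightarrow> real) set \<Rightarrow> real \<Rightarrow> ereal" where
  "calib k Phi L F \<epsilon> = Inf {ereal (excess_surr k Phi F f q) | f q.
      f \<in> F \<and> q \<in> prob_simplex k \<and> excess_loss k L F f q \<ge> \<epsilon>}"

text \<open>Block 0-1 loss: blk i is the block (in 1..b) containing label i.\<close>
definition L01b :: "(nat \<Rightarrow> nat) \<Rightarrow> nat \<Rightarrow> nat \<Rightarrow> real" where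
  "L01b blk i j = (if blk i = blk j then 0 else 1)"

definition Phi_quad :: "nat \<Rightarrow> (nat \<Rightarrow> nat \<Rightarrow> real) \<Rightarrow> (nat \<Rightarrow> real) \<Rightarrow> nat \<Rightarrow> real" where
  "Phi_quad k L f y = (1 / (2 * real k)) * (\<Sum>i\<in>{1..k}. (f i + L i y)^2)"

definition block_size :: "nat \<Rightarrow> (nat \<Rightarrow> nat) \<Rightarrow> nat \<Rightarrow> nat" where
  "block_size k blk v = card {i\<in>{1..k}. blk i = v}"

end

theory Submission
  imports Defs
begin

lemma inf_min:
  assumes "z \<in> X" "\<And>x. x \<in> X \<Longrightarrow> (z::real) \<le> x"
  shows "Inf X = z" using cInf_eq_minimum assms by blast

lemma pred_prop:
  assumes "k > 0"
  shows "pred k f \<in> {1..k} \<and> (\<forall>d\<in>{1..k}. f d \<le> f (pred k f))"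
proof -
  have fin: "finite (f ` {1..k})" "f ` {1..k} \<noteq> {}" using assms by auto
  obtain c where c: "c \<in> {1..k}" "f c = Max (f ` {1..k})"
    using Max_in[OF fin] by auto
  have "c \<in> {1..k} \<and> (\<forall>d\<in>{1..k}. f d \<le> f c)" using c fin by auto
  then show ?thesis unfolding pred_def by (rule LeastI)
qed

lemma pred_unique:
  assumes "j \<in> {1..k}" "\<And>d. d \<in> {1..k} \<Longrightarrow> d \<noteq> j \<Longrightarrow> f d < f j"
  shows "pred k f = j"
  unfolding pred_def
proof (rule Least_equality)
  show "j \<in> {1..k} \<and> (\<forall>d\<in>{1..k}. f d \<le> f j)" using assms by force
next
  fix y assume "y \<in> {1..k} \<and> (\<forall>d\<in>{1..k}. f d \<le> f y)"
  then have "y = j" using assms by force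
  then show "j \<le> y" by simp
qed

lemma sq_decomp:
  fixes q l :: "nat \<Rightarrow> real"
  assumes "(\<Sum>c\<in>A. q c) = 1"
  shows "(\<Sum>c\<in>A. q c * (a + l c)^2) = (a + (\<Sum>c\<in>A. q c * l c))^2
           + (\<Sum>c\<in>A. q c * (l c - (\<Sum>c\<in>A. q c * l c))^2)"
proof -
  define H where "H = (\<Sum>c\<in>A. q c * l c)"
  have e: "\<And>c. q c * (a + l c)^2 = (a+H)^2 * q c + 2*(a+H) * (q c * l c - H * q c) + q c * (l c - H)^2"
    by (simp add: power2_eq_square algebra_simps)
  have "(\<Sum>c\<in>A. q c * (a + l c)^2) = (a+H)^2 * (\<Sum>c\<in>A. q c) + 2*(a+H) * ((\<Sum>c\<in>A. q c * l c) - H * (\<Sum>c\<in>A. q c)) + (\<Sum>c\<in>A. q c * (l c - H)^2)"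
  proof -
    have "(\<Sum>c\<in>A. q c * (a + l c)^2) = (\<Sum>c\<in>A. (a+H)^2 * q c) + (\<Sum>c\<in>A. 2*(a+H) * (q c * l c - H * q c)) + (\<Sum>c\<in>A. q c * (l c - H)^2)"
      by (simp add: e sum.distrib)
    also have "(\<Sum>c\<in>A. 2*(a+H) * (q c * l c - H * q c)) = 2*(a+H) * ((\<Sum>c\<in>A. q c * l c) - H * (\<Sum>c\<in>A. q c))"
      by (simp add: sum_distrib_left[symmetric] sum_subtractf)
    finally show ?thesis by (simp add: sum_distrib_left[symmetric] sum_distrib_right[symmetric])
  qed
  then show ?thesis using assms by (simp add: H_def)
qed

lemma surr_decomp:
  assumes "q \<in> prob_simplex k"
  shows "cond_surr k (Phi_quad k L) g q = (1/(2*real k)) * (\<Sum>i\<in>{1..k}. (g i + (\<Sum>c\<in>{1..k}. q c * L i c))^2)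
     + (1/(2*real k)) * (\<Sum>i\<in>{1..k}. \<Sum>c\<in>{1..k}. q c * (L i c - (\<Sum>c\<in>{1..k}. q c * L i c))^2)"
proof -
  have s1: "(\<Sum>c\<in>{1..k}. q c) = 1" using assms by (simp add: prob_simplex_def)
  have "cond_surr k (Phi_quad k L) g q = (1/(2*real k)) * (\<Sum>i\<in>{1..k}. \<Sum>c\<in>{1..k}. q c * (g i + L i c)^2)"
    unfolding cond_surr_def Phi_quad_def
    apply (simp add: sum_distrib_left)
    apply (subst sum.swap)
    apply (simp add: algebra_simps)
    done
  also have "\<dots> = (1/(2*real k)) * (\<Sum>i\<in>{1..k}. (g i + (\<Sum>c\<in>{1..k}. q c * L i c))^2
      + (\<Sum>c\<in>{1..k}. q c * (L i c - (\<Sum>c\<in>{1..k}. q c * L i c))^2))"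
    using sq_decomp[OF s1] by simp
  finally show ?thesis by (simp add: sum.distrib algebra_simps)
qed

lemma excess_surr_eq:
  assumes "q \<in> prob_simplex k"
  shows "excess_surr k (Phi_quad k L) UNIV f q = (1/(2*real k)) * (\<Sum>i\<in>{1..k}. (f i + (\<Sum>c\<in>{1..k}. q c * L i c))^2)"
proof -
  define C where "C = (1/(2*real k)) * (\<Sum>i\<in>{1..k}. \<Sum>c\<in>{1..k}. q c * (L i c - (\<Sum>c\<in>{1..k}. q c * L i c))^2)"
  have D: "\<And>g. cond_surr k (Phi_quad k L) g q = (1/(2*real k)) * (\<Sum>i\<in>{1..k}. (g i + (\<Sum>c\<in>{1..k}. q c * L i c))^2) + C"
    using surr_decomp[OF assms] C_def by simp
  have "(INF g\<in>UNIV. cond_surr k (Phi_quad k L) g q) = C"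
  proof (rule inf_min)
    let ?g = "\<lambda>i. - (\<Sum>c\<in>{1..k}. q c * L i c)"
    show "C \<in> range (\<lambda>g. cond_surr k (Phi_quad k L) g q)"
      using D[of ?g] by (auto intro!: image_eqI[where x = ?g])
    fix x assume "x \<in> range (\<lambda>g. cond_surr k (Phi_quad k L) g q)"
    then obtain g where "x = cond_surr k (Phi_quad k L) g q" by auto
    then show "C \<le> x" using D[of g] by (simp add: sum_nonneg)
  qed
  then show ?thesis unfolding excess_surr_def using D by simp
qed

lemma excess_loss_eq:
  assumes "k > 0" "j0 \<in> {1..k}" "\<And>j. j \<in> {1..k} \<Longrightarrow> (\<Sum>c\<in>{1..k}. q c * L j0 c) \<le> (\<Sum>c\<in>{1..k}. q c * L j c)"
  shows "excess_loss k L UNIV f q = (\<Sum>c\<in>{1..k}. q c * L (pred k f) c) - (\<Sum>c\<in>{1..k}. q c * L j0 c)"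
proof -
  have "(INF g\<in>UNIV. cond_loss k L g q) = (\<Sum>c\<in>{1..k}. q c * L j0 c)"
  proof (rule inf_min)
    let ?g = "\<lambda>i. if i = j0 then 1 else (0::real)"
    have "pred k ?g = j0" by (rule pred_unique) (use assms in auto)
    then show "(\<Sum>c\<in>{1..k}. q c * L j0 c) \<in> range (\<lambda>g. cond_loss k L g q)"
      unfolding cond_loss_def by (auto intro!: image_eqI[where x = ?g])
    fix x assume "x \<in> range (\<lambda>g. cond_loss k L g q)"
    then obtain g where "x = cond_loss k L g q" by auto
    then show "(\<Sum>c\<in>{1..k}. q c * L j0 c) \<le> x"
      unfolding cond_loss_def using assms(3) pred_prop[OF assms(1), of g] by auto
  qed
  then show ?thesis unfolding excess_loss_def cond_loss_def by simp
qed


lemma key_ineq: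
  fixes a e :: real and s :: nat and x :: "nat \<Rightarrow> real"
  assumes "finite W" "card W = s" "0 \<le> e" "\<And>i. i \<in> W \<Longrightarrow> x i \<le> a - e"
  shows "real s * e^2 / (real s + 1) \<le> a^2 + (\<Sum>i\<in>W. (x i)^2)"
proof (cases "a \<ge> e")
  case True
  have "real s * e^2 / (real s + 1) \<le> e^2"
    by (simp add: divide_le_eq algebra_simps)
  also have "e^2 \<le> a^2" using True assms(3) by (simp add: power_mono)
  also have "a^2 \<le> a^2 + (\<Sum>i\<in>W. (x i)^2)" by (simp add: sum_nonneg)
  finally show ?thesis .
next
  case False
  have "\<And>i. i \<in> W \<Longrightarrow> (e - a)^2 \<le> (x i)^2"
  proof -
    fix i assume "i \<in> W"
    then have "x i \<le> a - e" by (rule assms(4))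
    then have "e - a \<le> \<bar>x i\<bar>" using False by linarith
    then have "(e-a)^2 \<le> \<bar>x i\<bar>^2" using False by (intro power_mono) auto
    then show "(e - a)^2 \<le> (x i)^2" by simp
  qed
  then have "(\<Sum>i\<in>W. (e - a)^2) \<le> (\<Sum>i\<in>W. (x i)^2)" by (rule sum_mono)
  then have 1: "real s * (e-a)^2 \<le> (\<Sum>i\<in>W. (x i)^2)" using assms(2) by simp
  have 2: "real s * e^2 / (real s + 1) \<le> a^2 + real s * (e-a)^2"
  proof -
    have "(real s + 1) * (a^2 + real s * (e-a)^2) - real s * e^2 = ((real s + 1) * a - real s * e)^2"
      by (simp add: power2_eq_square algebra_simps)
    then have "real s * e^2 \<le> (real s + 1) * (a^2 + real s * (e-a)^2)"
      by (smt (verit) zero_le_power2)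
    then show ?thesis by (simp add: divide_le_eq mult.commute)
  qed
  show ?thesis using 1 2 by linarith
qed

abbreviation "Mval k blk b \<equiv> Min ((\<lambda>v. 2 * real (block_size k blk v) / (real (block_size k blk v) + 1)) ` {1..b})"

lemma lower:
  assumes "k > 0" "blk ` {1..k} = {1..b}" "0 \<le> \<epsilon>" "q \<in> prob_simplex k"
    and "excess_loss k (L01b blk) UNIV f q \<ge> \<epsilon>"
  shows "\<epsilon>^2 / (4 * real k) * Mval k blk b \<le> excess_surr k (Phi_quad k (L01b blk)) UNIV f q"
proof -
  define h where "h i = (\<Sum>c\<in>{1..k}. q c * L01b blk i c)" for i
  have fin: "finite (h ` {1..k})" "h ` {1..k} \<noteq> {}" using assms by auto
  obtain j0 where j0: "j0 \<in> {1..k}" "h j0 = Min (h ` {1..k})"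
    using Min_in[OF fin] by auto
  have j0min: "\<And>j. j \<in> {1..k} \<Longrightarrow> h j0 \<le> h j" using j0 fin by auto
  define p where "p = pred k f"
  have pp: "p \<in> {1..k}" "\<And>d. d \<in> {1..k} \<Longrightarrow> f d \<le> f p"
    using pred_prop[OF assms(1), of f] p_def by auto
  have el: "excess_loss k (L01b blk) UNIV f q = h p - h j0"
    using excess_loss_eq[OF assms(1) j0(1), of q "L01b blk" f] j0min h_def p_def by simp
  have es: "excess_surr k (Phi_quad k (L01b blk)) UNIV f q = (1/(2*real k)) * (\<Sum>i\<in>{1..k}. (f i + h i)^2)"
    using excess_surr_eq[OF assms(4)] h_def by simp
  define W where "W = {i\<in>{1..k}. blk i = blk j0}"
  define s where "s = card W"
  have sdef: "s = block_size k blk (blk j0)" unfolding s_def W_def block_size_def by simp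
  have bj0: "blk j0 \<in> {1..b}" using assms(2) j0(1) by auto
  have hW: "\<And>i. i \<in> W \<Longrightarrow> h i = h j0" unfolding W_def h_def L01b_def by simp
  have Mle: "Mval k blk b \<le> 2 * real s / (real s + 1)"
    using bj0 sdef by (intro Min_le) auto
  show ?thesis
  proof (cases "\<epsilon> = 0")
    case True
    then show ?thesis using es by (simp add: sum_nonneg)
  next
    case False
    then have epos: "\<epsilon> > 0" using assms(3) by simp
    have pW: "p \<notin> W" using hW el assms(5) epos by force
    have finW: "finite W" unfolding W_def by simp
    have le: "\<And>i. i \<in> W \<Longrightarrow> f i + h i \<le> (f p + h p) - \<epsilon>"
    proof -
      fix i assume i: "i \<in> W"
      then have "f i \<le> f p" using pp(2) W_def by auto
      then show "f i + h i \<le> (f p + h p) - \<epsilon>" using hW[OF i] el assms(5) by linarith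
    qed
    have K: "real s * \<epsilon>^2 / (real s + 1) \<le> (f p + h p)^2 + (\<Sum>i\<in>W. (f i + h i)^2)"
      by (rule key_ineq[OF finW s_def[symmetric] assms(3) le])
    have "(f p + h p)^2 + (\<Sum>i\<in>W. (f i + h i)^2) = (\<Sum>i\<in>insert p W. (f i + h i)^2)"
      using pW finW by simp
    also have "\<dots> \<le> (\<Sum>i\<in>{1..k}. (f i + h i)^2)"
      using pp(1) W_def by (intro sum_mono2) auto
    finally have K2: "real s * \<epsilon>^2 / (real s + 1) \<le> (\<Sum>i\<in>{1..k}. (f i + h i)^2)" using K by linarith
    have "\<epsilon>^2 / (4 * real k) * Mval k blk b \<le> \<epsilon>^2 / (4 * real k) * (2 * real s / (real s + 1))"
      using Mle by (intro mult_left_mono) auto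
    also have "\<dots> = (1/(2*real k)) * (real s * \<epsilon>^2 / (real s + 1))"
      using assms(1) by (simp add: field_simps power2_eq_square)
    also have "\<dots> \<le> (1/(2*real k)) * (\<Sum>i\<in>{1..k}. (f i + h i)^2)"
      using K2 assms(1) by (intro mult_left_mono) auto
    finally show ?thesis using es by simp
  qed
qed


lemma upper:
  assumes "b \<ge> 2" "blk ` {1..k} = {1..b}" "0 \<le> \<epsilon>" "\<epsilon> \<le> 1" "e > 0"
  shows "\<exists>f q. q \<in> prob_simplex k \<and> excess_loss k (L01b blk) UNIV f q \<ge> \<epsilon>
     \<and> excess_surr k (Phi_quad k (L01b blk)) UNIV f q \<le> \<epsilon>^2 / (4 * real k) * Mval k blk b + e"
proof -
  have kpos: "k > 0" using assms(1,2) by (cases k) auto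
  have finM: "finite ((\<lambda>v. 2 * real (block_size k blk v) / (real (block_size k blk v) + 1)) ` {1..b})"
    "((\<lambda>v. 2 * real (block_size k blk v) / (real (block_size k blk v) + 1)) ` {1..b}) \<noteq> {}"
    using assms(1) by auto
  obtain v0 where v0: "v0 \<in> {1..b}" "Mval k blk b = 2 * real (block_size k blk v0) / (real (block_size k blk v0) + 1)"
    using Min_in[OF finM] by auto
  define u where "u = (if v0 = 1 then 2 else (1::nat))"
  have u: "u \<in> {1..b}" "u \<noteq> v0" using assms(1) u_def by auto
  obtain c0 where c0: "c0 \<in> {1..k}" "blk c0 = v0" using v0(1) assms(2) by (metis imageE)
  obtain j where j: "j \<in> {1..k}" "blk j = u" using u(1) assms(2) by (metis imageE)
  have jc0: "j \<noteq> c0" using c0 j u by auto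
  define W where "W = {i\<in>{1..k}. blk i = v0}"
  define s where "s = card W"
  have sdef: "block_size k blk v0 = s" unfolding s_def W_def block_size_def by simp
  define T where "T = real s * \<epsilon> / (real s + 1)"
  have T0: "0 \<le> T" unfolding T_def using assms(3) by simp
  have T1: "T \<le> 1"
  proof -
    have "T \<le> \<epsilon>" unfolding T_def using assms(3) by (simp add: divide_le_eq algebra_simps)
    then show ?thesis using assms(4) by simp
  qed
  define \<delta> where "\<delta> = min 1 (real k * e / 2)"
  have d0: "\<delta> > 0" "\<delta> \<le> 1" "\<delta> \<le> real k * e / 2" unfolding \<delta>_def using kpos assms(5) by auto
  define q where "q c = (if c = c0 then (1+\<epsilon>)/2 else if c = j then (1-\<epsilon>)/2 else 0)" for c
  define h where "h i = (\<Sum>c\<in>{1..k}. q c * L01b blk i c)" for i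
  have hval: "h i = (1+\<epsilon>)/2 * L01b blk i c0 + (1-\<epsilon>)/2 * L01b blk i j" for i
  proof -
    have "\<And>c. q c * L01b blk i c = (if c = c0 then (1+\<epsilon>)/2 * L01b blk i c0 else 0) + (if c = j then (1-\<epsilon>)/2 * L01b blk i j else 0)"
      unfolding q_def using jc0 by auto
    then show ?thesis unfolding h_def using c0(1) j(1) by (simp add: sum.distrib)
  qed
  have qs: "q \<in> prob_simplex k"
  proof -
    have "\<And>c. q c = (if c = c0 then (1+\<epsilon>)/2 else 0) + (if c = j then (1-\<epsilon>)/2 else 0)"
      unfolding q_def using jc0 by auto
    then have "(\<Sum>c\<in>{1..k}. q c) = 1" using c0(1) j(1) by (simp add: sum.distrib field_simps)
    moreover have "\<forall>c\<in>{1..k}. 0 \<le> q c" unfolding q_def using assms(3,4) by auto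
    ultimately show ?thesis unfolding prob_simplex_def by auto
  qed
  have hv0: "\<And>i. blk i = v0 \<Longrightarrow> h i = (1-\<epsilon>)/2" using hval c0 j u by (simp add: L01b_def)
  have hu: "\<And>i. blk i = u \<Longrightarrow> h i = (1+\<epsilon>)/2" using hval c0 j u by (simp add: L01b_def)
  have ho: "\<And>i. blk i \<noteq> u \<Longrightarrow> blk i \<noteq> v0 \<Longrightarrow> h i = 1"
  proof -
    fix i assume "blk i \<noteq> u" "blk i \<noteq> v0"
    then have "h i = (1+\<epsilon>)/2 + (1-\<epsilon>)/2" using hval[of i] c0 j by (simp add: L01b_def)
    then show "h i = 1" by (simp add: field_simps)
  qed
  have hmin: "\<And>i. h c0 \<le> h i"
  proof -
    fix i show "h c0 \<le> h i" using hv0[of c0] hv0[of i] hu[of i] ho[of i] c0 assms(3,4) by (cases "blk i = v0"; cases "blk i = u") auto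
  qed
  define f where "f i = (if i = j then -(1+\<epsilon>)/2 + T + \<delta> else if blk i = v0 then -(1+\<epsilon>)/2 + T else - h i)" for i
  have pf: "pred k f = j"
  proof (rule pred_unique[OF j(1)])
    fix d assume "d \<in> {1..k}" "d \<noteq> j"
    then show "f d < f j"
      using hu[of d] ho[of d] d0 T0 assms(4) unfolding f_def by (cases "blk d = v0"; cases "blk d = u") (auto simp: field_simps)
  qed
  have el: "excess_loss k (L01b blk) UNIV f q = \<epsilon>"
    using excess_loss_eq[OF kpos c0(1), of q "L01b blk" f] hmin pf hu[OF j(2)] hv0[OF c0(2)] h_def
    by simp
  have fh: "\<And>i. (f i + h i)^2 = (if i = j then (T+\<delta>)^2 else 0) + (if blk i = v0 then (T-\<epsilon>)^2 else 0)"
  proof -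
    fix i show "(f i + h i)^2 = (if i = j then (T+\<delta>)^2 else 0) + (if blk i = v0 then (T-\<epsilon>)^2 else 0)"
    proof (cases "i = j")
      case True then show ?thesis unfolding f_def using hu[OF j(2)] j u by (simp add: field_simps power2_eq_square)
    next
      case False
      show ?thesis
      proof (cases "blk i = v0")
        case True
        have "f i + h i = T - \<epsilon>" unfolding f_def using hv0[OF True] True \<open>i \<noteq> j\<close> by (simp add: field_simps)
        then show ?thesis using True \<open>i \<noteq> j\<close> by simp
      qed (use \<open>i \<noteq> j\<close> in \<open>simp add: f_def\<close>)
    qed
  qed
  have sumfh: "(\<Sum>i\<in>{1..k}. (f i + h i)^2) = (T+\<delta>)^2 + real s * (T-\<epsilon>)^2"
  proof -
    have "(\<Sum>i\<in>{1..k}. (if blk i = v0 then (T-\<epsilon>)^2 else 0)) = (\<Sum>i\<in>W. (T-\<epsilon>)^2)"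
      unfolding W_def by (rule sum.inter_filter[symmetric]) simp
    then show ?thesis unfolding fh using j(1) by (simp add: sum.distrib s_def)
  qed
  have es: "excess_surr k (Phi_quad k (L01b blk)) UNIV f q = (1/(2*real k)) * ((T+\<delta>)^2 + real s * (T-\<epsilon>)^2)"
    using excess_surr_eq[OF qs] h_def sumfh by simp
  have alg: "(T+\<delta>)^2 + real s * (T-\<epsilon>)^2 = real s * \<epsilon>^2 / (real s + 1) + (2*T*\<delta> + \<delta>^2)"
  proof -
    have P: "real s + 1 > 0" by simp
    have hT: "T*(real s+1) = real s*\<epsilon>" unfolding T_def using P by simp
    have e2: "real s*\<epsilon>^2/(real s+1) = \<epsilon>*T" unfolding T_def using P by (simp add: power2_eq_square)
    have "((T+\<delta>)^2 + real s * (T-\<epsilon>)^2) - (\<epsilon>*T + (2*T*\<delta> + \<delta>^2)) = T*(T*(real s+1) - real s*\<epsilon>) - \<epsilon>*(T*(real s+1) - real s*\<epsilon>)"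
      by (simp add: power2_eq_square algebra_simps)
    then show ?thesis using hT e2 by simp
  qed
  have small: "2*T*\<delta> + \<delta>^2 \<le> 3 * \<delta>"
  proof -
    have "2*T*\<delta> \<le> 2 * \<delta>" using T1 d0 by simp
    moreover have "\<delta>^2 \<le> \<delta>" using d0 by (simp add: power2_eq_square mult_le_cancel_right1)
    ultimately show ?thesis by simp
  qed
  have "excess_surr k (Phi_quad k (L01b blk)) UNIV f q = \<epsilon>^2 / (4 * real k) * Mval k blk b + (2*T*\<delta> + \<delta>^2) / (2 * real k)"
  proof -
    have a1: "real s * \<epsilon>^2 / (real s + 1) / (2 * real k) = \<epsilon>^2 / (4 * real k) * (2 * real s / (real s + 1))"
    proof -
      have "real s * \<epsilon>^2 / (real s + 1) / (2 * real k) = (real s * \<epsilon>^2) / ((real s + 1) * (2 * real k))"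
        by simp
      also have "\<dots> = (2 * (real s * \<epsilon>^2)) / (2 * ((real s + 1) * (2 * real k)))"
        by (rule mult_divide_mult_cancel_left[symmetric]) simp
      also have "\<dots> = \<epsilon>^2 / (4 * real k) * (2 * real s / (real s + 1))"
        by (simp only: times_divide_times_eq) (simp add: algebra_simps)
      finally show ?thesis .
    qed
    have "(1/(2*real k)) * (real s * \<epsilon>^2 / (real s + 1) + (2*T*\<delta> + \<delta>^2))
       = real s * \<epsilon>^2 / (real s + 1) / (2 * real k) + (2*T*\<delta> + \<delta>^2) / (2 * real k)"
      by (simp add: add_divide_distrib)
    then show ?thesis unfolding es alg v0(2) sdef a1 .
  qed
  also have "\<dots> \<le> \<epsilon>^2 / (4 * real k) * Mval k blk b + e"
  proof -
    have "2*T*\<delta> + \<delta>^2 \<le> 3 * (real k * e / 2)" using small d0 by linarith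
    then have "(2*T*\<delta> + \<delta>^2) / (2 * real k) \<le> 3 * (real k * e / 2) / (2 * real k)"
      using kpos by (intro divide_right_mono) auto
    also have "\<dots> \<le> e" using kpos assms(5) by (simp add: field_simps)
    finally show ?thesis by simp
  qed
  finally show ?thesis using qs el by auto
qed


theorem proposition13:
  fixes k b :: nat and blk :: "nat \<Rightarrow> nat" and \<epsilon> :: real
  assumes "b \<ge> 2"
    and "blk ` {1..k} = {1..b}"
    and "0 \<le> \<epsilon>" and "\<epsilon> \<le> 1"
  shows "calib k (Phi_quad k (L01b blk)) (L01b blk) UNIV \<epsilon>
           = ereal (\<epsilon>^2 / (4 * real k) *
               Min ((\<lambda>v. 2 * real (block_size k blk v) / (real (block_size k blk v) + 1)) ` {1..b}))
         \<and> \<epsilon>^2 / (4 * real k) *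
               Min ((\<lambda>v. 2 * real (block_size k blk v) / (real (block_size k blk v) + 1)) ` {1..b})
           \<le> \<epsilon>^2 / (2 * real k)"
proof
  have kpos: "k > 0" using assms(1,2) by (cases k) auto
  define S where "S = {ereal (excess_surr k (Phi_quad k (L01b blk)) UNIV f q) | f q.
      f \<in> (UNIV :: (nat \<Rightarrow> real) set) \<and> q \<in> prob_simplex k \<and> excess_loss k (L01b blk) UNIV f q \<ge> \<epsilon>}"
  have c: "calib k (Phi_quad k (L01b blk)) (L01b blk) UNIV \<epsilon> = Inf S"
    unfolding calib_def S_def by simp
  have ge: "ereal (\<epsilon>^2 / (4 * real k) * Mval k blk b) \<le> Inf S"
  proof (rule Inf_greatest)
    fix x assume "x \<in> S"
    then obtain f q where "x = ereal (excess_surr k (Phi_quad k (L01b blk)) UNIV f q)"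
      "q \<in> prob_simplex k" "excess_loss k (L01b blk) UNIV f q \<ge> \<epsilon>" unfolding S_def by auto
    then show "ereal (\<epsilon>^2 / (4 * real k) * Mval k blk b) \<le> x"
      using lower[OF kpos assms(2) assms(3)] by simp
  qed
  have le: "Inf S \<le> ereal (\<epsilon>^2 / (4 * real k) * Mval k blk b)"
  proof (rule ereal_le_epsilon2)
    fix e :: real assume "0 < e"
    then obtain f q where fq: "q \<in> prob_simplex k" "excess_loss k (L01b blk) UNIV f q \<ge> \<epsilon>"
      "excess_surr k (Phi_quad k (L01b blk)) UNIV f q \<le> \<epsilon>^2 / (4 * real k) * Mval k blk b + e"
      using upper[OF assms] by blast
    have "Inf S \<le> ereal (excess_surr k (Phi_quad k (L01b blk)) UNIV f q)"
      using fq unfolding S_def by (intro Inf_lower) auto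
    also have "\<dots> \<le> ereal (\<epsilon>^2 / (4 * real k) * Mval k blk b) + ereal e" using fq(3) by simp
    finally show "Inf S \<le> ereal (\<epsilon>^2 / (4 * real k) * Mval k blk b) + ereal e" .
  qed
  show "calib k (Phi_quad k (L01b blk)) (L01b blk) UNIV \<epsilon> = ereal (\<epsilon>^2 / (4 * real k) * Mval k blk b)"
    using c ge le by simp
  have "Mval k blk b \<le> 2 * real (block_size k blk 1) / (real (block_size k blk 1) + 1)"
    using assms(1) by (intro Min_le) auto
  also have "\<dots> \<le> 2" by (simp add: divide_le_eq)
  finally have "\<epsilon>^2 / (4 * real k) * Mval k blk b \<le> \<epsilon>^2 / (4 * real k) * 2"
    by (intro mult_left_mono) auto
  then show "\<epsilon>^2 / (4 * real k) * Mval k blk b \<le> \<epsilon>^2 / (2 * real k)" by simp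
qed

end
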